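(* Consider a rate-1 Poisson point process in $\mathbb{R}^2$ with an extra point (city) planted at the origin. For $\sigma>0$ let $D(\sigma)$ be the sum of Euclidean distances between all pairs of cities lying within the disc of radius $\sigma$ centred at the origin. Then for any random variable $\Sigma\ge0$ (defined on the same probability space, possibly dependent on the point process) with all moments finite, the random variable $D(\Sigma)$ has all moments finite. *)

theory Defs
  imports "HOL-Probability.Probability"
begin

definition pcount :: "('a \<Rightarrow> (real^2) set) \<Rightarrow> (real^2) set \<Rightarrow> 'a \<Rightarrow> nat" where
  "pcount N B \<omega> = card (N \<omega> \<inter> B)"

definition poisson_pp :: "'a measure \<Rightarrow> ('a \<Rightarrow> (real^2) set) \<Rightarrow> bool" where
  "poisson_pp M N \<longleftrightarrow>
     prob_space M \<and>
     (\<forall>\<omega>\<in>space M. \<forall>B. bounded B \<longrightarrow> finite (N \<omega> \<inter> B)) \<and>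
     (\<forall>B \<in> sets lborel. bounded B \<longrightarrow>
        pcount N B \<in> measurable M (count_space UNIV) \<and>
        (\<forall>k::nat. measure M {\<omega> \<in> space M. pcount N B \<omega> = k}
                   = measure lborel B ^ k / fact k * exp (- measure lborel B))) \<and>
     (\<forall>(I::nat set) (B::nat \<Rightarrow> (real^2) set). finite I \<longrightarrow>
        (\<forall>i\<in>I. B i \<in> sets lborel \<and> bounded (B i)) \<longrightarrow>
        disjoint_family_on B I \<longrightarrow>
        prob_space.indep_vars M (\<lambda>_. count_space UNIV) (\<lambda>i. pcount N (B i)) I)"

text \<open>Cities: the points of the process together with an extra city at the origin.
\<open>pair_dist_sum N \<sigma> \<omega>\<close> is the sum of Euclidean distances over all unordered pairs of
distinct cities lying in the closed disc of radius \<open>\<sigma>\<close> about the origin (the ordered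
double sum counts each unordered pair twice, and diagonal terms vanish).\<close>

definition cities :: "('a \<Rightarrow> (real^2) set) \<Rightarrow> 'a \<Rightarrow> (real^2) set" where
  "cities N \<omega> = insert 0 (N \<omega>)"

definition pair_dist_sum :: "('a \<Rightarrow> (real^2) set) \<Rightarrow> real \<Rightarrow> 'a \<Rightarrow> real" where
  "pair_dist_sum N \<sigma> \<omega> =
     (let C = cities N \<omega> \<inter> cball 0 \<sigma> in (\<Sum>x\<in>C. \<Sum>y\<in>C. dist x y) / 2)"

end

theory Submission
  imports Defs
begin


lemma pow_le_exp:
  fixes y :: real assumes "y \<ge> 0"
  shows "y ^ r / fact r \<le> exp y"
proof -
  have s: "(\<lambda>n. y^n / fact n) sums exp y"
    using exp_converges[of y] by (simp add: divide_inverse mult.commute scaleR_conv_of_real)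
  have "sum (\<lambda>n. y^n / fact n) {r} \<le> (\<Sum>n. y^n / fact n)"
    by (rule sum_le_suminf) (use s assms in \<open>auto simp: sums_iff\<close>)
  then show ?thesis using s by (simp add: sums_iff)
qed

lemma pow_le_geom:
  fixes lam :: real and k r :: nat assumes lam: "lam \<ge> 0"
  shows "(1 + real k) ^ r \<le> fact r * (lam + 2) ^ r * (1 + 1/(lam+1)) ^ (k+1)"
proof -
  define c where "c = 1 + 1/(lam+1)"
  define t where "t = ln c"
  have c1: "c > 1" using lam by (simp add: c_def)
  have "ln (1/c) \<le> 1/c - 1" using c1 by (intro ln_le_minus_one) simp
  then have "t \<ge> 1 - 1/c" using c1 by (simp add: t_def ln_div)
  also have "1 - 1/c = 1/(lam+2)" using lam by (simp add: c_def field_simps)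
  finally have t: "t \<ge> 1/(lam+2)" .
  have "1/(lam+2) > 0" using lam by simp
  then have tpos: "t > 0" using t by linarith
  have e: "exp (real (k+1) * t) = c ^ (k+1)"
    using c1 unfolding t_def by (subst exp_of_nat_mult) simp
  have "(real (k+1) * t) ^ r / fact r \<le> c ^ (k+1)"
    using pow_le_exp[of "real (k+1) * t" r] tpos e by simp
  then have "(real (k+1) * t) ^ r \<le> fact r * c^(k+1)"
    by (simp add: field_simps)
  then have "(1 + real k) ^ r * t ^ r \<le> fact r * c^(k+1)"
    by (simp add: power_mult_distrib add.commute)
  moreover have "(1 + real k) ^ r \<le> (1 + real k) ^ r * t ^ r * (lam+2)^r"
  proof -
    have "1 \<le> t * (lam + 2)" using t lam by (simp add: field_simps)
    then have "1 \<le> (t * (lam+2))^r" by simp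
    then have "(1 + real k) ^ r * 1 \<le> (1 + real k) ^ r * (t * (lam+2))^r"
      by (intro mult_left_mono) auto
    then show ?thesis by (simp add: power_mult_distrib mult.assoc)
  qed
  ultimately have "(1 + real k) ^ r \<le> fact r * c^(k+1) * (lam+2)^r"
  proof -
    assume h1: "(1 + real k) ^ r * t ^ r \<le> fact r * c^(k+1)"
      and h2: "(1 + real k) ^ r \<le> (1 + real k) ^ r * t ^ r * (lam+2)^r"
    have "(1 + real k) ^ r * t ^ r * (lam+2)^r \<le> fact r * c^(k+1) * (lam+2)^r"
      using h1 lam by (intro mult_right_mono) auto
    with h2 show ?thesis by linarith
  qed
  then show ?thesis by (simp add: c_def mult_ac)
qed

lemma poisson_moment:
  assumes P: "prob_space M" and Y: "Y \<in> measurable M (count_space UNIV)" and lam: "lam \<ge> 0"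
    and d: "\<And>k. measure M {\<omega>\<in>space M. Y \<omega> = k} = lam^k / fact k * exp (-lam)"
  shows "(\<integral>\<^sup>+\<omega>. ennreal ((1 + real (Y \<omega>))^r) \<partial>M) \<le> ennreal (2 * exp 1 * fact r * (lam+2)^r)"
proof -
  define c where "c = 1 + 1/(lam+1)"
  define F where "F = fact r * (lam+2)^r"
  define A where "A k = {\<omega>\<in>space M. Y \<omega> = k}" for k
  have Fpos: "F \<ge> 0" using lam by (simp add: F_def)
  have c1: "c \<ge> 1" "c \<le> 2" using lam by (auto simp: c_def field_simps)
  have A: "A k \<in> sets M" for k
    unfolding A_def using Y by measurable
  have dA: "disjoint_family A" by (auto simp: disjoint_family_on_def A_def)
  have "(\<integral>\<^sup>+\<omega>. ennreal ((1 + real (Y \<omega>))^r) \<partial>M) \<le> (\<integral>\<^sup>+\<omega>. ennreal (F * c^(Y \<omega> + 1)) \<partial>M)"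
    by (intro nn_integral_mono ennreal_leI) (use pow_le_geom[OF lam] in \<open>simp add: F_def c_def\<close>)
  also have "\<dots> = (\<integral>\<^sup>+\<omega>. (\<Sum>k. ennreal (F * c^(k+1)) * indicator (A k) \<omega>) \<partial>M)"
    by (intro nn_integral_cong suminf_cmult_indicator[symmetric, OF dA]) (auto simp: A_def)
  also have "\<dots> = (\<Sum>k. ennreal (F * c^(k+1)) * emeasure M (A k))"
    by (subst nn_integral_suminf) (use A in \<open>auto simp: nn_integral_cmult_indicator\<close>)
  also have "\<dots> = (\<Sum>k. ennreal (F * c^(k+1) * (lam^k / fact k * exp (-lam))))"
    using finite_measure.emeasure_eq_measure[OF prob_space.finite_measure[OF P]] d c1 Fpos lam
    by (simp add: A_def ennreal_mult'[symmetric])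
  also have "\<dots> = ennreal (F*c*exp(-lam)*exp(c*lam))"
  proof -
    have "(\<lambda>n. (c*lam)^n / fact n) sums exp (c*lam)"
      using exp_converges[of "c*lam"] by (simp add: divide_inverse mult.commute scaleR_conv_of_real)
    then have "(\<lambda>n. F*c*exp(-lam) * ((c*lam)^n / fact n)) sums (F*c*exp(-lam)*exp(c*lam))"
      by (rule sums_mult)
    then have s: "(\<lambda>k. F * c^(k+1) * (lam^k / fact k * exp (-lam))) sums (F*c*exp(-lam)*exp(c*lam))"
      by (simp add: power_mult_distrib field_simps)
    show ?thesis
      by (subst suminf_ennreal2) (use s c1 Fpos lam in \<open>auto simp: sums_iff\<close>)
  qed
  also have "\<dots> \<le> ennreal (2 * exp 1 * fact r * (lam+2)^r)"
  proof (intro ennreal_leI)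
    have "exp(-lam)*exp(c*lam) = exp (lam/(lam+1))"
      using lam by (simp add: c_def field_simps flip: exp_add)
    also have "\<dots> \<le> exp 1" using lam by simp
    finally have "c * (exp(-lam)*exp(c*lam)) \<le> 2 * exp 1"
      using c1 by (intro mult_mono) auto
    then have "F * (c * (exp(-lam)*exp(c*lam))) \<le> F * (2 * exp 1)"
      using Fpos by (intro mult_left_mono) auto
    then show "F*c*exp(-lam)*exp(c*lam) \<le> 2 * exp 1 * fact r * (lam+2)^r"
      by (simp add: F_def mult_ac)
  qed
  finally show ?thesis .
qed



lemma pp_prob: "poisson_pp M N \<Longrightarrow> prob_space M"
  by (simp add: poisson_pp_def)

lemma pp_finite: "poisson_pp M N \<Longrightarrow> \<omega> \<in> space M \<Longrightarrow> bounded B \<Longrightarrow> finite (N \<omega> \<inter> B)"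
  by (simp add: poisson_pp_def)

lemma pp_meas: "poisson_pp M N \<Longrightarrow> B \<in> sets lborel \<Longrightarrow> bounded B \<Longrightarrow>
   pcount N B \<in> measurable M (count_space UNIV)"
  by (simp add: poisson_pp_def)

lemma pp_dist: "poisson_pp M N \<Longrightarrow> B \<in> sets lborel \<Longrightarrow> bounded B \<Longrightarrow>
   measure M {\<omega> \<in> space M. pcount N B \<omega> = k} = measure lborel B ^ k / fact k * exp (- measure lborel B)"
  by (simp add: poisson_pp_def)

lemma cities_finite: "poisson_pp M N \<Longrightarrow> \<omega> \<in> space M \<Longrightarrow> bounded B \<Longrightarrow> finite (cities N \<omega> \<inter> B)"
proof -
  assume a: "poisson_pp M N" "\<omega> \<in> space M" "bounded B"
  have "cities N \<omega> \<inter> B \<subseteq> insert 0 (N \<omega> \<inter> B)" by (auto simp: cities_def)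
  then show ?thesis using pp_finite[OF a] finite_subset by blast
qed

lemma cities_count_meas:
  assumes pp: "poisson_pp M N" and A: "A \<in> sets lborel" "bounded A"
  shows "(\<lambda>\<omega>. real (card (cities N \<omega> \<inter> A))) \<in> borel_measurable M"
proof -
  have m1: "pcount N A \<in> measurable M (count_space UNIV)" using pp_meas[OF pp A] .
  have m0: "pcount N {0} \<in> measurable M (count_space UNIV)" using pp_meas[OF pp] by simp
  have eq: "real (card (cities N \<omega> \<inter> A)) =
     real (pcount N A \<omega>) + (if 0 \<in> A \<and> pcount N {0} \<omega> = 0 then 1 else 0)"
    if w: "\<omega> \<in> space M" for \<omega>
  proof -
    have fA: "finite (N \<omega> \<inter> A)" using pp_finite[OF pp w A(2)] .
    have f0: "finite (N \<omega> \<inter> {0})" using pp_finite[OF pp w, of "{0}"] by simp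
    have z: "pcount N {0} \<omega> = 0 \<longleftrightarrow> 0 \<notin> N \<omega>"
      using f0 by (auto simp: pcount_def)
    show ?thesis
    proof (cases "0 \<in> A")
      case True
      then have "cities N \<omega> \<inter> A = insert 0 (N \<omega> \<inter> A)" by (auto simp: cities_def)
      then show ?thesis using fA True z by (auto simp: pcount_def insert_absorb)
    next
      case False
      then have "cities N \<omega> \<inter> A = N \<omega> \<inter> A" by (auto simp: cities_def)
      then show ?thesis using False by (simp add: pcount_def)
    qed
  qed
  have "(\<lambda>\<omega>. real (pcount N A \<omega>) + (if 0 \<in> A \<and> pcount N {0} \<omega> = 0 then 1 else 0)) \<in> borel_measurable M"
    using m1 m0 by measurable
  then show ?thesis using eq by (subst measurable_cong) auto
qed



lemma sum_regroup:
  fixes h :: "'b \<Rightarrow> real"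
  assumes "finite C" "finite I" "g ` C \<subseteq> I"
  shows "(\<Sum>x\<in>C. h (g x)) = (\<Sum>a\<in>I. real (card {x\<in>C. g x = a}) * h a)"
proof -
  have "(\<Sum>x\<in>C. h (g x)) = (\<Sum>a\<in>I. \<Sum>x\<in>{x\<in>C. g x = a}. h (g x))"
    using sum.group[OF assms, of "\<lambda>x. h (g x)"] by simp
  also have "\<dots> = (\<Sum>a\<in>I. real (card {x\<in>C. g x = a}) * h a)"
    by (intro sum.cong refl) simp
  finally show ?thesis .
qed

lemma sum_regroup2:
  fixes F :: "'b \<Rightarrow> 'b \<Rightarrow> real"
  assumes "finite C" "finite I" "g ` C \<subseteq> I"
  shows "(\<Sum>x\<in>C. \<Sum>y\<in>C. F (g x) (g y)) =
     (\<Sum>a\<in>I. \<Sum>b\<in>I. real (card {x\<in>C. g x = a}) * real (card {x\<in>C. g x = b}) * F a b)"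
proof -
  have "(\<Sum>x\<in>C. \<Sum>y\<in>C. F (g x) (g y)) = (\<Sum>x\<in>C. \<Sum>b\<in>I. real (card {x\<in>C. g x = b}) * F (g x) b)"
    by (intro sum.cong refl sum_regroup[OF assms])
  also have "\<dots> = (\<Sum>b\<in>I. \<Sum>x\<in>C. real (card {x\<in>C. g x = b}) * F (g x) b)"
    by (rule sum.swap)
  also have "\<dots> = (\<Sum>b\<in>I. \<Sum>a\<in>I. real (card {x\<in>C. g x = a}) * (real (card {x\<in>C. g x = b}) * F a b))"
    by (intro sum.cong refl) (subst sum_regroup[OF assms, symmetric], simp add: mult_ac)
  also have "\<dots> = (\<Sum>a\<in>I. \<Sum>b\<in>I. real (card {x\<in>C. g x = a}) * real (card {x\<in>C. g x = b}) * F a b)"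
    by (subst sum.swap) (simp add: mult_ac)
  finally show ?thesis .
qed

lemma floor_approx: "(\<lambda>n. real_of_int \<lfloor>2^n * t\<rfloor> / 2^n) \<longlonglongrightarrow> (t::real)"
proof (rule tendsto_sandwich[of "\<lambda>n. t - (1/2)^n" _ _ "\<lambda>n. t"])
  show "\<forall>\<^sub>F n in sequentially. t - (1/2)^n \<le> real_of_int \<lfloor>2^n * t\<rfloor> / 2^n"
  proof (intro always_eventually allI)
    fix n :: nat
    have "2^n * t - 1 \<le> real_of_int \<lfloor>2^n * t\<rfloor>" by linarith
    then have "(2^n * t - 1) / 2^n \<le> real_of_int \<lfloor>2^n * t\<rfloor> / 2^n"
      by (intro divide_right_mono) auto
    moreover have "(2^n * t - 1) / 2^n = t - (1/2::real)^n"
      by (simp add: field_simps power_one_over)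
    ultimately show "t - (1/2)^n \<le> real_of_int \<lfloor>2^n * t\<rfloor> / 2^n"
      by simp
  qed
  show "\<forall>\<^sub>F n in sequentially. real_of_int \<lfloor>2^n * t\<rfloor> / 2^n \<le> t"
  proof (intro always_eventually allI)
    fix n :: nat
    have "real_of_int \<lfloor>2^n * t\<rfloor> \<le> 2^n * t" by linarith
    then show "real_of_int \<lfloor>2^n * t\<rfloor> / 2^n \<le> t"
      by (simp add: field_simps)
  qed
  show "(\<lambda>n. t - (1/2)^n) \<longlonglongrightarrow> t"
    using tendsto_diff[OF tendsto_const LIMSEQ_realpow_zero[of "1/2::real"]] by simp
qed simp

definition idx :: "nat \<Rightarrow> real^2 \<Rightarrow> int \<times> int" where
  "idx n x = (\<lfloor>2^n * x$1\<rfloor>, \<lfloor>2^n * x$2\<rfloor>)"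

definition ctr :: "nat \<Rightarrow> int \<times> int \<Rightarrow> real^2" where
  "ctr n a = (\<chi> i. if i = 1 then real_of_int (fst a) / 2^n else real_of_int (snd a) / 2^n)"

lemma ctr_idx: "ctr n (idx n x) = (\<chi> i. real_of_int \<lfloor>2^n * x$i\<rfloor> / 2^n)"
  unfolding ctr_def idx_def vec_eq_iff using exhaust_2 by force

lemma ctr_idx_lim: "(\<lambda>n. ctr n (idx n x)) \<longlonglongrightarrow> x"
  unfolding ctr_idx by (rule vec_tendstoI) (simp add: floor_approx)

lemma idx_sets: "{x. idx n x = a} \<in> sets lborel"
proof -
  have "{x. idx n x = a} = {x::real^2. \<lfloor>2^n * x$1\<rfloor> = fst a \<and> \<lfloor>2^n * x$2\<rfloor> = snd a}"
    by (cases a) (auto simp: idx_def)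
  also have "\<dots> \<in> sets borel" by measurable
  finally show ?thesis by simp
qed

lemma idx_bound:
  assumes "norm x \<le> r"
  shows "idx n x \<in> {-\<lceil>2^n*r\<rceil>..\<lceil>2^n*r\<rceil>} \<times> {-\<lceil>2^n*r\<rceil>..\<lceil>2^n*r\<rceil>}"
proof -
  have b: "\<bar>x$i\<bar> \<le> r" for i using component_le_norm_cart[of x i] assms by linarith
  have c: "-\<lceil>2^n*r\<rceil> \<le> \<lfloor>2^n * x$i\<rfloor> \<and> \<lfloor>2^n * x$i\<rfloor> \<le> \<lceil>2^n*r\<rceil>" for i
  proof -
    have "-r \<le> x$i" "x$i \<le> r" using b[of i] by (auto simp: abs_le_iff)
    then have "2^n * (-r) \<le> 2^n * x$i" "2^n * x$i \<le> 2^n*r"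
      by (intro mult_left_mono; simp)+
    then show ?thesis by linarith
  qed
  show ?thesis using c[of 1] c[of 2] by (simp add: idx_def)
qed

lemma Dfix_meas:
  assumes pp: "poisson_pp M N"
  shows "(\<lambda>\<omega>. pair_dist_sum N r \<omega>) \<in> borel_measurable M"
proof (rule borel_measurable_LIMSEQ_real)
  define C where "C \<omega> = cities N \<omega> \<inter> cball 0 r" for \<omega>
  define u where "u n \<omega> = (\<Sum>x\<in>C \<omega>. \<Sum>y\<in>C \<omega>. dist (ctr n (idx n x)) (ctr n (idx n y))) / 2" for n \<omega>
  show "(\<lambda>n. u n \<omega>) \<longlonglongrightarrow> pair_dist_sum N r \<omega>" if "\<omega> \<in> space M" for \<omega>
    unfolding u_def pair_dist_sum_def Let_def C_def
    by (intro tendsto_intros ctr_idx_lim) auto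
  show "u n \<in> borel_measurable M" for n
  proof -
    define K where "K = \<lceil>2^n*r\<rceil>"
    define I where "I = {-K..K} \<times> {-K..K}"
    define cnt where "cnt a \<omega> = real (card (cities N \<omega> \<inter> (cball 0 r \<inter> {x. idx n x = a})))" for a \<omega>
    have eq: "u n \<omega> = (\<Sum>a\<in>I. \<Sum>b\<in>I. cnt a \<omega> * cnt b \<omega> * dist (ctr n a) (ctr n b)) / 2"
      if w: "\<omega> \<in> space M" for \<omega>
    proof -
      have fC: "finite (C \<omega>)" unfolding C_def by (rule cities_finite[OF pp w]) simp
      have sub: "idx n ` C \<omega> \<subseteq> I" using idx_bound by (force simp: C_def I_def K_def)
      have cc: "{x \<in> C \<omega>. idx n x = a} = cities N \<omega> \<inter> (cball 0 r \<inter> {x. idx n x = a})" for a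
        by (auto simp: C_def)
      show ?thesis unfolding u_def
        by (subst sum_regroup2[OF fC _ sub]) (auto simp: I_def cc cnt_def)
    qed
    have m: "cnt a \<in> borel_measurable M" for a
      unfolding cnt_def
    proof (rule cities_count_meas[OF pp])
      show "cball 0 r \<inter> {x. idx n x = a} \<in> sets lborel"
        by (rule sets.Int) (use idx_sets[of n a] in auto)
    qed (auto intro: bounded_subset[OF bounded_cball])
    have "(\<lambda>\<omega>. (\<Sum>a\<in>I. \<Sum>b\<in>I. cnt a \<omega> * cnt b \<omega> * dist (ctr n a) (ctr n b)) / 2) \<in> borel_measurable M"
      using m by measurable
    then show ?thesis using eq by (subst measurable_cong) auto
  qed
qed



lemma D_meas:
  assumes pp: "poisson_pp M N" and S: "S \<in> borel_measurable M"
  shows "(\<lambda>\<omega>. pair_dist_sum N (S \<omega>) \<omega>) \<in> borel_measurable M"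
proof (rule borel_measurable_LIMSEQ_real)
  define q where "q n \<omega> = (real_of_int \<lfloor>2^n * S \<omega>\<rfloor> + 1) / 2^n" for n \<omega>
  show "(\<lambda>\<omega>. pair_dist_sum N (q n \<omega>) \<omega>) \<in> borel_measurable M" for n
  proof -
    have g: "(\<lambda>\<omega>. \<lfloor>2^n * S \<omega>\<rfloor>) \<in> measurable M (count_space UNIV)"
      using S by measurable
    have "(\<lambda>\<omega>. (\<lambda>i::int. \<lambda>\<omega>. pair_dist_sum N ((real_of_int i + 1) / 2^n) \<omega>) (\<lfloor>2^n * S \<omega>\<rfloor>) \<omega>) \<in> borel_measurable M"
      by (rule measurable_compose_countable[OF _ g]) (rule Dfix_meas[OF pp])
    then show ?thesis by (simp add: q_def)
  qed
  show "(\<lambda>n. pair_dist_sum N (q n \<omega>) \<omega>) \<longlonglongrightarrow> pair_dist_sum N (S \<omega>) \<omega>"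
    if w: "\<omega> \<in> space M" for \<omega>
  proof (rule tendsto_eventually)
    define s where "s = S \<omega>"
    have qlo: "s < q n \<omega>" for n
    proof -
      have "2^n * s < real_of_int \<lfloor>2^n * s\<rfloor> + 1" by linarith
      then show ?thesis by (simp add: q_def s_def field_simps)
    qed
    have qhi: "q n \<omega> \<le> s + (1/2)^n" for n
    proof -
      have "real_of_int \<lfloor>2^n * s\<rfloor> + 1 \<le> 2^n * s + 1" by linarith
      then have "(real_of_int \<lfloor>2^n * s\<rfloor> + 1) / 2^n \<le> (2^n * s + 1) / 2^n"
        by (intro divide_right_mono) auto
      then show ?thesis by (simp add: q_def s_def field_simps power_one_over)
    qed
    have qhi1: "q n \<omega> \<le> s + 1" for n
      using qhi[of n] power_le_one[of "1/2::real" n] by linarith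
    have lim: "(\<lambda>n. q n \<omega>) \<longlonglongrightarrow> s"
    proof (rule tendsto_sandwich[of "\<lambda>n. s" _ _ "\<lambda>n. s + (1/2)^n"])
      show "(\<lambda>n. s + (1/2)^n) \<longlonglongrightarrow> s"
        using tendsto_add[OF tendsto_const LIMSEQ_realpow_zero[of "1/2::real"]] by simp
    qed (use qlo qhi in \<open>auto intro!: always_eventually less_imp_le\<close>)
    define F where "F = cities N \<omega> \<inter> cball 0 (s + 1)"
    have fF: "finite F" unfolding F_def by (rule cities_finite[OF pp w]) simp
    have ev: "\<forall>\<^sub>F n in sequentially. \<forall>x\<in>F. norm x \<le> q n \<omega> \<longrightarrow> norm x \<le> s"
    proof (rule eventually_ball_finite[OF fF], rule ballI)
      fix x assume "x \<in> F"
      show "\<forall>\<^sub>F n in sequentially. norm x \<le> q n \<omega> \<longrightarrow> norm x \<le> s"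
      proof (cases "norm x \<le> s")
        case False
        then have "\<forall>\<^sub>F n in sequentially. q n \<omega> < norm x"
          using order_tendstoD(2)[OF lim] by simp
        then show ?thesis by eventually_elim auto
      qed simp
    qed
    show "\<forall>\<^sub>F n in sequentially. pair_dist_sum N (q n \<omega>) \<omega> = pair_dist_sum N (S \<omega>) \<omega>"
      using ev
    proof eventually_elim
      case (elim n)
      have "cities N \<omega> \<inter> cball 0 (q n \<omega>) = cities N \<omega> \<inter> cball 0 s"
      proof
        show "cities N \<omega> \<inter> cball 0 (q n \<omega>) \<subseteq> cities N \<omega> \<inter> cball 0 s"
        proof
          fix x assume x: "x \<in> cities N \<omega> \<inter> cball 0 (q n \<omega>)"
          then have "x \<in> F" using qhi1[of n] by (auto simp: F_def)
          then show "x \<in> cities N \<omega> \<inter> cball 0 s" using elim x by auto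
        qed
        show "cities N \<omega> \<inter> cball 0 s \<subseteq> cities N \<omega> \<inter> cball 0 (q n \<omega>)"
          using qlo[of n] by auto
      qed
      then show ?case by (simp add: pair_dist_sum_def s_def)
    qed
  qed
qed



lemma D_bound:
  assumes pp: "poisson_pp M N" and w: "\<omega> \<in> space M" and s: "s \<ge> 0"
  shows "0 \<le> pair_dist_sum N s \<omega> \<and>
         pair_dist_sum N s \<omega> \<le> s * (1 + real (pcount N (cball 0 (real (nat \<lceil>s\<rceil>))) \<omega>))^2"
proof -
  define C where "C = cities N \<omega> \<inter> cball 0 s"
  define B where "B = N \<omega> \<inter> cball 0 (real (nat \<lceil>s\<rceil>))"
  have fC: "finite C" unfolding C_def by (rule cities_finite[OF pp w]) simp
  have fB: "finite B" unfolding B_def by (rule pp_finite[OF pp w]) simp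
  have sub: "C \<subseteq> insert 0 B"
  proof
    fix x assume "x \<in> C"
    moreover have "s \<le> real (nat \<lceil>s\<rceil>)" using s by linarith
    ultimately show "x \<in> insert 0 B" by (auto simp: C_def B_def cities_def)
  qed
  have "card C \<le> card (insert 0 B)" by (rule card_mono) (use fB sub in auto)
  also have "\<dots> \<le> 1 + card B" using fB by (simp add: card_insert_if)
  finally have cC: "real (card C) \<le> 1 + real (pcount N (cball 0 (real (nat \<lceil>s\<rceil>))) \<omega>)"
    by (simp add: B_def pcount_def)
  have "(\<Sum>x\<in>C. \<Sum>y\<in>C. dist x y) \<le> (\<Sum>x\<in>C. \<Sum>y\<in>C. 2 * s)"
  proof (intro sum_mono)
    fix x y assume "x \<in> C" "y \<in> C"
    then have "norm x \<le> s" "norm y \<le> s" by (auto simp: C_def)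
    moreover have "dist x y \<le> norm x + norm y" by (simp add: dist_norm norm_triangle_ineq4)
    ultimately show "dist x y \<le> 2 * s" by linarith
  qed
  also have "\<dots> = real (card C)^2 * (2 * s)" by (simp add: power2_eq_square)
  finally have "pair_dist_sum N s \<omega> \<le> real (card C)^2 * s"
    by (simp add: pair_dist_sum_def Let_def C_def[symmetric])
  also have "\<dots> \<le> (1 + real (pcount N (cball 0 (real (nat \<lceil>s\<rceil>))) \<omega>))^2 * s"
    using cC s by (intro mult_right_mono power_mono) auto
  finally have up: "pair_dist_sum N s \<omega> \<le> s * (1 + real (pcount N (cball 0 (real (nat \<lceil>s\<rceil>))) \<omega>))^2"
    by (simp add: mult.commute)
  have "0 \<le> pair_dist_sum N s \<omega>"
    by (simp add: pair_dist_sum_def Let_def sum_nonneg)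
  with up show ?thesis by simp
qed

lemma ab_le: "(a::real) \<ge> 0 \<Longrightarrow> b \<ge> 0 \<Longrightarrow> a * b \<le> a^2 + b^2"
proof -
  assume ab: "a \<ge> 0" "b \<ge> 0"
  have "0 \<le> (a - b)^2" by simp
  then have "2*a*b \<le> a^2 + b^2" by (simp add: power2_diff)
  moreover have "0 \<le> a * b" using ab by simp
  ultimately show ?thesis by linarith
qed

lemma a_le_w: "(a::real) \<ge> 0 \<Longrightarrow> w > 0 \<Longrightarrow> a \<le> a^2 / w + w"
proof -
  assume a: "a \<ge> 0" "w > 0"
  have "a * w \<le> a^2 + w^2" using ab_le[of a w] a by simp
  then have "a * w / w \<le> (a^2 + w^2) / w" using a by (intro divide_right_mono) auto
  then show ?thesis using a by (simp add: field_simps power2_eq_square)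
qed

lemma measure_cball2: "r \<ge> 0 \<Longrightarrow> measure lborel (cball (0::real^2) r) = unit_ball_vol 2 * r^2"
  by (simp add: measure_def emeasure_cball)



lemma nn_fin:
  assumes "integrable M f" "\<And>\<omega>. \<omega> \<in> space M \<Longrightarrow> 0 \<le> g \<omega> \<and> g \<omega> \<le> f \<omega>"
  shows "(\<integral>\<^sup>+\<omega>. ennreal (g \<omega>) \<partial>M) < \<infinity>"
proof -
  have "(\<integral>\<^sup>+\<omega>. ennreal (g \<omega>) \<partial>M) \<le> (\<integral>\<^sup>+\<omega>. ennreal (norm (f \<omega>)) \<partial>M)"
    using assms(2) by (intro nn_integral_mono ennreal_leI) force
  also have "\<dots> < \<infinity>" using assms(1) by (simp add: integrable_iff_bounded)
  finally show ?thesis .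
qed

theorem lemma3:
  fixes M :: "'a measure" and N :: "'a \<Rightarrow> (real^2) set" and \<Sigma> :: "'a \<Rightarrow> real"
  assumes "poisson_pp M N"
    and "\<And>\<omega>. \<omega> \<in> space M \<Longrightarrow> \<Sigma> \<omega> \<ge> 0"
    and "\<And>k::nat. integrable M (\<lambda>\<omega>. \<Sigma> \<omega> ^ k)"
  shows "\<forall>k::nat. integrable M (\<lambda>\<omega>. pair_dist_sum N (\<Sigma> \<omega>) \<omega> ^ k)"
proof (intro allI)
  fix k :: nat
  have pp: "poisson_pp M N" using assms(1) .
  have P: "prob_space M" using pp_prob[OF pp] .
  then interpret prob_space M .
  have Spos: "\<And>\<omega>. \<omega> \<in> space M \<Longrightarrow> \<Sigma> \<omega> \<ge> 0" using assms(2) .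
  have Sm: "\<Sigma> \<in> borel_measurable M" using borel_measurable_integrable[OF assms(3)[of 1]] by simp
  define X where "X j \<omega> = real (pcount N (cball 0 (real j)) \<omega>)" for j \<omega>
  define nn where "nn \<omega> = nat \<lceil>\<Sigma> \<omega>\<rceil>" for \<omega>
  define p where "p = 4*k"
  define q where "q = 4*p+2"
  define D where "D \<omega> = pair_dist_sum N (\<Sigma> \<omega>) \<omega>" for \<omega>
  define V where "V = unit_ball_vol 2"
  define A where "A = V + 2"
  define K0 where "K0 = 2 * exp 1 * fact (2*p) * A^(2*p)"
  have V0: "V \<ge> 0" by (simp add: V_def)
  have pcm: "pcount N (cball 0 (real j)) \<in> measurable M (count_space UNIV)" for j
    by (rule pp_meas[OF pp]) auto
  have Xm: "X j \<in> borel_measurable M" for j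
    unfolding X_def using measurable_compose[OF pcm[of j], of real borel] by simp
  have nnm: "nn \<in> measurable M (count_space UNIV)" unfolding nn_def using Sm by measurable
  have Dm: "D \<in> borel_measurable M" unfolding D_def by (rule D_meas[OF pp Sm])
  define G where "G \<omega> = (\<Sum>j. ennreal ((1 + X j \<omega>)^(2*p) / real (j+1)^q))" for \<omega>
  have Gm: "G \<in> borel_measurable M" unfolding G_def using Xm by measurable
  have pw: "ennreal (norm (D \<omega> ^ k)) \<le> ennreal (\<Sigma> \<omega> ^ (2*k)) + G \<omega> + ennreal (real (nn \<omega> + 1) ^ q)"
    if w: "\<omega> \<in> space M" for \<omega>
  proof -
    define x where "x = X (nn \<omega>) \<omega>"
    define s where "s = \<Sigma> \<omega>"
    have s0: "s \<ge> 0" using Spos[OF w] by (simp add: s_def)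
    have x0: "x \<ge> 0" by (simp add: x_def X_def)
    have b: "0 \<le> D \<omega>" "D \<omega> \<le> s * (1 + x)^2"
      using D_bound[OF pp w s0] by (auto simp: D_def s_def x_def X_def nn_def)
    have "norm (D \<omega> ^ k) = D \<omega> ^ k" using b by simp
    also have "\<dots> \<le> (s * (1 + x)^2) ^ k" using b by (intro power_mono) auto
    also have "\<dots> = s^k * (1+x)^(2*k)" by (simp add: power_mult_distrib power_mult)
    also have "\<dots> \<le> (s^k)^2 + ((1+x)^(2*k))^2" using s0 x0 by (intro ab_le) auto
    also have "\<dots> = s^(2*k) + (1+x)^p" by (simp add: p_def flip: power_mult) (simp add: mult.commute)
    finally have 1: "norm (D \<omega> ^ k) \<le> s^(2*k) + (1+x)^p" .
    have "(1+x)^p \<le> ((1+x)^p)^2 / real (nn \<omega> + 1)^q + real (nn \<omega> + 1)^q"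
      using x0 by (intro a_le_w) auto
    also have "((1+x)^p)^2 = (1+x)^(2*p)" by (simp flip: power_mult) (simp add: mult.commute)
    finally have 2: "(1+x)^p \<le> (1+x)^(2*p) / real (nn \<omega> + 1)^q + real (nn \<omega> + 1)^q" .
    have 3: "ennreal ((1+x)^(2*p) / real (nn \<omega> + 1)^q) \<le> G \<omega>"
    proof -
      have "ennreal ((1+x)^(2*p) / real (nn \<omega> + 1)^q) = (\<Sum>j\<in>{nn \<omega>}. ennreal ((1 + X j \<omega>)^(2*p) / real (j+1)^q))"
        by (simp add: x_def)
      also have "\<dots> \<le> G \<omega>" unfolding G_def by (rule sum_le_suminf) auto
      finally show ?thesis .
    qed
    have "ennreal (norm (D \<omega> ^ k)) \<le> ennreal (s^(2*k) + ((1+x)^(2*p) / real (nn \<omega> + 1)^q + real (nn \<omega> + 1)^q))"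
      using 1 2 by (intro ennreal_leI) linarith
    also have "\<dots> = ennreal (s^(2*k)) + ennreal ((1+x)^(2*p) / real (nn \<omega> + 1)^q) + ennreal (real (nn \<omega> + 1)^q)"
      using s0 x0 by (simp add: ennreal_plus add.assoc)
    also have "\<dots> \<le> ennreal (s^(2*k)) + G \<omega> + ennreal (real (nn \<omega> + 1)^q)"
      using 3 by (intro add_mono) auto
    finally show ?thesis by (simp add: s_def)
  qed
  have I1: "(\<integral>\<^sup>+\<omega>. ennreal (\<Sigma> \<omega> ^ (2*k)) \<partial>M) < \<infinity>"
    by (rule nn_fin[OF assms(3)[of "2*k"]]) (use Spos in auto)
  have I3: "(\<integral>\<^sup>+\<omega>. ennreal (real (nn \<omega> + 1) ^ q) \<partial>M) < \<infinity>"
  proof (rule nn_fin)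
    show "integrable M (\<lambda>\<omega>. 4^q * (\<Sigma> \<omega> ^ q + 1))"
      using assms(3)[of q] by auto
    fix \<omega> assume w: "\<omega> \<in> space M"
    define s where "s = \<Sigma> \<omega>"
    have s0: "s \<ge> 0" using Spos[OF w] by (simp add: s_def)
    have nb: "real (nn \<omega> + 1) \<le> s + 2" unfolding nn_def s_def[symmetric] using s0 by linarith
    have "real (nn \<omega> + 1) ^ q \<le> 4^q * (s ^ q + 1)"
    proof (cases "s \<le> 1")
      case True
      then have "real (nn \<omega> + 1) ^ q \<le> 4 ^ q" using nb by (intro power_mono) auto
      also have "\<dots> \<le> 4^q * (s^q + 1)" using s0 by simp
      finally show ?thesis .
    next
      case False
      then have "real (nn \<omega> + 1) ^ q \<le> (4 * s) ^ q" using nb by (intro power_mono) auto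
      also have "\<dots> \<le> 4^q * (s^q + 1)" by (simp add: power_mult_distrib)
      finally show ?thesis .
    qed
    then show "0 \<le> real (nn \<omega> + 1) ^ q \<and> real (nn \<omega> + 1) ^ q \<le> 4^q * (\<Sigma> \<omega> ^ q + 1)"
      by (simp add: s_def)
  qed
  have I2: "(\<integral>\<^sup>+\<omega>. G \<omega> \<partial>M) < \<infinity>"
  proof -
    have tm: "(\<integral>\<^sup>+\<omega>. ennreal ((1 + X j \<omega>)^(2*p) / real (j+1)^q) \<partial>M)
          \<le> ennreal (K0 * inverse (real (Suc j) ^ 2))" for j
    proof -
      define lam where "lam = measure lborel (cball (0::real^2) (real j))"
      have lam: "lam = V * real j ^ 2" unfolding lam_def V_def by (rule measure_cball2) simp
      have lam0: "lam \<ge> 0" by (simp add: lam_def)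
      have mom: "(\<integral>\<^sup>+\<omega>. ennreal ((1 + X j \<omega>)^(2*p)) \<partial>M) \<le> ennreal (2 * exp 1 * fact (2*p) * (lam+2)^(2*p))"
        unfolding X_def lam_def
        by (rule poisson_moment[OF P pcm]) (simp, rule pp_dist[OF pp], auto)
      have "(\<integral>\<^sup>+\<omega>. ennreal ((1 + X j \<omega>)^(2*p) / real (j+1)^q) \<partial>M)
          = (\<integral>\<^sup>+\<omega>. ennreal ((1 + X j \<omega>)^(2*p)) * ennreal (1 / real (j+1)^q) \<partial>M)"
        by (intro nn_integral_cong) (simp add: X_def ennreal_mult'[symmetric] divide_inverse)
      also have "\<dots> = (\<integral>\<^sup>+\<omega>. ennreal ((1 + X j \<omega>)^(2*p)) \<partial>M) * ennreal (1 / real (j+1)^q)"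
        by (rule nn_integral_multc) (use Xm[of j] in measurable)
      also have "\<dots> \<le> ennreal (2 * exp 1 * fact (2*p) * (lam+2)^(2*p)) * ennreal (1 / real (j+1)^q)"
        by (intro mult_right_mono mom) auto
      also have "\<dots> = ennreal (2 * exp 1 * fact (2*p) * (lam+2)^(2*p) / real (j+1)^q)"
        using lam0 by (simp add: ennreal_mult'[symmetric])
      also have "\<dots> \<le> ennreal (K0 * inverse (real (Suc j) ^ 2))"
      proof (intro ennreal_leI)
        have "lam + 2 \<le> A * real (j+1)^2"
          using V0 unfolding lam A_def by (simp add: algebra_simps power2_eq_square)
        then have "(lam + 2)^(2*p) \<le> (A * real (j+1)^2)^(2*p)" using lam0 by (intro power_mono) auto
        also have "\<dots> = A^(2*p) * real (j+1)^(4*p)"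
          by (simp add: power_mult_distrib flip: power_mult)
        finally have h: "(lam + 2)^(2*p) \<le> A^(2*p) * real (j+1)^(4*p)" .
        have "2 * exp 1 * fact (2*p) * (lam+2)^(2*p) / real (j+1)^q
            \<le> 2 * exp 1 * fact (2*p) * (A^(2*p) * real (j+1)^(4*p)) / real (j+1)^q"
          by (intro divide_right_mono mult_left_mono h) auto
        also have "\<dots> = K0 * inverse (real (Suc j) ^ 2)"
        proof -
          have e: "real (j+1)^q = real (j+1)^(4*p) * real (Suc j)^2" by (simp add: q_def power_add power2_eq_square)
          have gen: "c * (a * y) / (y * z) = c * a * inverse z" if "y > 0" "z > 0" for c a y z :: real
            using that by (simp add: field_simps)
          show ?thesis unfolding e K0_def by (rule gen) auto
        qed
        finally show "2 * exp 1 * fact (2*p) * (lam+2)^(2*p) / real (j+1)^q \<le> K0 * inverse (real (Suc j) ^ 2)" .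
      qed
      finally show ?thesis .
    qed
    have summ: "summable (\<lambda>j. K0 * inverse (real (Suc j) ^ 2))"
      by (intro summable_mult) (subst summable_Suc_iff, rule inverse_power_summable, simp)
    have K00: "K0 \<ge> 0" using V0 by (simp add: K0_def A_def)
    have "(\<integral>\<^sup>+\<omega>. G \<omega> \<partial>M) = (\<Sum>j. \<integral>\<^sup>+\<omega>. ennreal ((1 + X j \<omega>)^(2*p) / real (j+1)^q) \<partial>M)"
      unfolding G_def by (rule nn_integral_suminf) (use Xm in measurable)
    also have "\<dots> \<le> (\<Sum>j. ennreal (K0 * inverse (real (Suc j) ^ 2)))"
      by (intro suminf_le tm) auto
    also have "\<dots> = ennreal (\<Sum>j. K0 * inverse (real (Suc j) ^ 2))"
      by (rule suminf_ennreal2) (use K00 summ in auto)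
    also have "\<dots> < \<infinity>" by simp
    finally show ?thesis .
  qed
  have "(\<integral>\<^sup>+\<omega>. ennreal (norm (D \<omega> ^ k)) \<partial>M)
     \<le> (\<integral>\<^sup>+\<omega>. (ennreal (\<Sigma> \<omega> ^ (2*k)) + G \<omega> + ennreal (real (nn \<omega> + 1) ^ q)) \<partial>M)"
    by (intro nn_integral_mono pw)
  also have "\<dots> = (\<integral>\<^sup>+\<omega>. ennreal (\<Sigma> \<omega> ^ (2*k)) \<partial>M) + (\<integral>\<^sup>+\<omega>. G \<omega> \<partial>M)
       + (\<integral>\<^sup>+\<omega>. ennreal (real (nn \<omega> + 1) ^ q) \<partial>M)"
    using Sm Gm nnm by (simp add: nn_integral_add)
  also have "\<dots> < \<infinity>" using I1 I2 I3 by (simp add: less_top)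
  finally have fin: "(\<integral>\<^sup>+\<omega>. ennreal (norm (D \<omega> ^ k)) \<partial>M) < \<infinity>" .
  have "integrable M (\<lambda>\<omega>. D \<omega> ^ k)"
    using Dm fin by (subst integrable_iff_bounded) auto
  then show "integrable M (\<lambda>\<omega>. pair_dist_sum N (\<Sigma> \<omega>) \<omega> ^ k)" by (simp add: D_def)
qed


end
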